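(* Assume $0<b\gamma-m\mu<\mu^2$, so that $E_4=\Big(\frac{\mu^2-b\gamma+m\mu}{\mu\gamma},\frac{b\gamma-m\mu}{\mu\gamma},0,0\Big)$ has strictly positive $B$- and $I$-components. Then the Jacobian matrix of system (S) at $E_4$ never has a pair of nonzero purely imaginary eigenvalues; in particular, no Hopf bifurcation can occur at $E_4$ as parameters vary within this feasibility region.
   Context: The model (S) is the system of ODEs for healthy bees $B$, infected bees $I$, healthy mites $M$ and infected mites $N$: $$B'=b\frac{B}{B+I}-\lambda BN-\gamma BI-mB,$$ $$I'=b\frac{I}{B+I}+\lambda BN+\gamma BI-(m+\mu)I,$$ $$M'=r\Big(1-\frac{M+N}{K}\Big)(M+N)-\beta MI-\delta MN-eMB,$$ $$N'=-nN-pN(N+M)+\beta MI+\delta MN-eNB,$$ where all parameters $b,\lambda,\gamma,m,\mu,r,K,\beta,\delta,e,n,p$ are positive constants. *)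

theory Defs
  imports "HOL-Analysis.Derivative" "Jordan_Normal_Form.Char_Poly"
begin

text \<open>A state is a function x :: nat => real with
  x 0 = B (healthy bees), x 1 = I (infected bees), x 2 = M (healthy mites),
  x 3 = N (infected mites).\<close>

definition field_S ::
  "real \<Rightarrow> real \<Rightarrow> real \<Rightarrow> real \<Rightarrow> real \<Rightarrow> real \<Rightarrow> real \<Rightarrow> real \<Rightarrow> real \<Rightarrow> real \<Rightarrow> real \<Rightarrow> real
   \<Rightarrow> (nat \<Rightarrow> real) \<Rightarrow> nat \<Rightarrow> real" where
  "field_S b lam \<gamma> m \<mu> r K \<beta> \<delta> e n p x i =
    (let B = x 0; I = x 1; M = x 2; N = x 3 in
     if i = 0 then b * B / (B + I) - lam * B * N - \<gamma> * B * I - m * B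
     else if i = 1 then b * I / (B + I) + lam * B * N + \<gamma> * B * I - (m + \<mu>) * I
     else if i = 2 then r * (1 - (M + N) / K) * (M + N) - \<beta> * M * I - \<delta> * M * N - e * M * B
     else -n * N - p * N * (N + M) + \<beta> * M * I + \<delta> * M * N - e * N * B)"

definition jacobian_S ::
  "real \<Rightarrow> real \<Rightarrow> real \<Rightarrow> real \<Rightarrow> real \<Rightarrow> real \<Rightarrow> real \<Rightarrow> real \<Rightarrow> real \<Rightarrow> real \<Rightarrow> real \<Rightarrow> real
   \<Rightarrow> (nat \<Rightarrow> real) \<Rightarrow> real mat" where
  "jacobian_S b lam \<gamma> m \<mu> r K \<beta> \<delta> e n p x =
    mat 4 4 (\<lambda>(i, j). deriv (\<lambda>t. field_S b lam \<gamma> m \<mu> r K \<beta> \<delta> e n p (x(j := t)) i) (x j))"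

definition E4 :: "real \<Rightarrow> real \<Rightarrow> real \<Rightarrow> real \<Rightarrow> nat \<Rightarrow> real" where
  "E4 b \<gamma> m \<mu> = (\<lambda>i. if i = 0 then (\<mu>^2 - b * \<gamma> + m * \<mu>) / (\<mu> * \<gamma>)
                     else if i = 1 then (b * \<gamma> - m * \<mu>) / (\<mu> * \<gamma>)
                     else 0)"

end

theory Submission
  imports Defs
begin

definition JM :: "real \<Rightarrow> real \<Rightarrow> real \<Rightarrow> real \<Rightarrow> real \<Rightarrow> real \<Rightarrow> real \<Rightarrow> real \<Rightarrow> real \<Rightarrow> real \<Rightarrow> real \<Rightarrow> real
   \<Rightarrow> (nat \<Rightarrow> real) \<Rightarrow> real mat" where
 "JM b lam \<gamma> m \<mu> r K \<beta> \<delta> e n p x = mat 4 4 (\<lambda>(i,j).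
    [[b * x 1 / (x 0 + x 1)^2 - \<gamma> * x 1 - m, - b * x 0 / (x 0 + x 1)^2 - \<gamma> * x 0, 0, - lam * x 0],
     [- b * x 1 / (x 0 + x 1)^2 + \<gamma> * x 1, b * x 0 / (x 0 + x 1)^2 + \<gamma> * x 0 - m - \<mu>, 0, lam * x 0],
     [0, 0, r - \<beta> * x 1 - e * x 0, r],
     [0, 0, \<beta> * x 1, - n - e * x 0]] ! i ! j)"

lemma jac:
  assumes S: "x 0 + x 1 \<noteq> 0" and M: "x 2 = 0" and N: "x 3 = 0" and K: "K \<noteq> 0"
  shows "jacobian_S b lam \<gamma> m \<mu> r K \<beta> \<delta> e n p x = JM b lam \<gamma> m \<mu> r K \<beta> \<delta> e n p x"
  apply (rule eq_matI)
  apply (simp_all add: jacobian_S_def JM_def)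
  subgoal for i j
    apply (subgoal_tac "i \<in> {0,1,2,3} \<and> j \<in> {0,1,2,3}")
     prefer 2 apply force
    unfolding field_S_def Let_def
    apply (auto simp: M N)
    apply (auto intro!: DERIV_imp_deriv derivative_eq_intros simp: S add.commute K power2_eq_square)
    using S apply (simp_all add: field_simps power2_eq_square)
    done
  done

lemma two_by_two:
  fixes a b c d \<omega> :: real and u w :: complex
  assumes "\<omega> \<noteq> 0"
    and e1: "of_real a * u + of_real b * w = \<i> * of_real \<omega> * u"
    and e2: "of_real c * u + of_real d * w = \<i> * of_real \<omega> * w"
    and nz: "u \<noteq> 0 \<or> w \<noteq> 0"
  shows "a + d = 0 \<and> a * d - b * c = \<omega>^2"
proof -
  define k where "k = \<i> * of_real \<omega>"
  define D where "D = (of_real a - k) * (of_real d - k) - of_real b * of_real c"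
  have z1: "of_real a * u + of_real b * w - k * u = 0" using e1 unfolding k_def by simp
  have z2: "of_real c * u + of_real d * w - k * w = 0" using e2 unfolding k_def by simp
  have "D * u = (of_real d - k) * (of_real a * u + of_real b * w - k*u) - of_real b * (of_real c * u + of_real d * w - k*w)"
    unfolding D_def by (simp add: algebra_simps)
  then have "D * u = 0" using z1 z2 by simp
  moreover have "D * w = (of_real a - k) * (of_real c * u + of_real d * w - k*w) - of_real c * (of_real a * u + of_real b * w - k*u)"
    unfolding D_def by (simp add: algebra_simps)
  then have "D * w = 0" using z1 z2 by simp
  ultimately have "D = 0" using nz by auto
  then have "Re D = 0" "Im D = 0" by auto
  then have h1: "a * d - \<omega>^2 - b * c = 0" and h2: "- \<omega> * (a + d) = 0"
    unfolding D_def k_def by (auto simp: algebra_simps power2_eq_square)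
  from h2 assms(1) have "a + d = 0" by simp
  with h1 show ?thesis by simp
qed

theorem mainTheorem10:
  fixes b lam \<gamma> m \<mu> r K \<beta> \<delta> e n p :: real
  assumes "b > 0" "lam > 0" "\<gamma> > 0" "m > 0" "\<mu> > 0" "r > 0" "K > 0"
      "\<beta> > 0" "\<delta> > 0" "e > 0" "n > 0" "p > 0"
    and "0 < b * \<gamma> - m * \<mu>" and "b * \<gamma> - m * \<mu> < \<mu>^2"
  shows "\<forall>\<omega>::real. \<omega> \<noteq> 0 \<longrightarrow>
    \<not> eigenvalue (map_mat complex_of_real
          (jacobian_S b lam \<gamma> m \<mu> r K \<beta> \<delta> e n p (E4 b \<gamma> m \<mu>)))
        (\<i> * complex_of_real \<omega>)"
proof (intro allI impI notI)
  fix \<omega> :: real assume w0: "\<omega> \<noteq> 0"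
  define x where "x = E4 b \<gamma> m \<mu>"
  define B where "B = x 0"
  define I where "I = x 1"
  have B: "B > 0" unfolding B_def x_def E4_def using assms
    by (auto intro!: divide_pos_pos simp: algebra_simps)
  have I: "I > 0" unfolding I_def x_def E4_def using assms
    by (auto intro!: divide_pos_pos simp: algebra_simps)
  have SS: "B + I = \<mu> / \<gamma>" unfolding B_def I_def x_def E4_def using assms
    by (auto simp: field_simps power2_eq_square)
  have x23: "x 2 = 0" "x 3 = 0" unfolding x_def E4_def by auto
  have J: "jacobian_S b lam \<gamma> m \<mu> r K \<beta> \<delta> e n p x = JM b lam \<gamma> m \<mu> r K \<beta> \<delta> e n p x"
    apply (rule jac) using B I x23 assms unfolding B_def I_def by auto
  assume "eigenvalue (map_mat complex_of_real
          (jacobian_S b lam \<gamma> m \<mu> r K \<beta> \<delta> e n p (E4 b \<gamma> m \<mu>)))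
        (\<i> * complex_of_real \<omega>)"
  then obtain v where v: "v \<in> carrier_vec 4" "v \<noteq> 0\<^sub>v 4"
    and ev: "map_mat complex_of_real (JM b lam \<gamma> m \<mu> r K \<beta> \<delta> e n p x) *\<^sub>v v = (\<i> * complex_of_real \<omega>) \<cdot>\<^sub>v v"
    unfolding eigenvalue_def eigenvector_def J[unfolded x_def] x_def by (auto simp: JM_def)
  have dv: "dim_vec v = 4" using v by auto
  have eq: "(\<Sum>j<4. of_real (JM b lam \<gamma> m \<mu> r K \<beta> \<delta> e n p x $$ (i,j)) * v $ j) = \<i> * complex_of_real \<omega> * v $ i"
    if "i < 4" for i
  proof -
    have "(map_mat complex_of_real (JM b lam \<gamma> m \<mu> r K \<beta> \<delta> e n p x) *\<^sub>v v) $ i = ((\<i> * complex_of_real \<omega>) \<cdot>\<^sub>v v) $ i"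
      using ev by simp
    then show ?thesis using that dv
      by (simp add: JM_def mult_mat_vec_def scalar_prod_def lessThan_atLeast0)
  qed
  let ?S = "B + I"
  have e0: "of_real (b * I / ?S^2 - \<gamma> * I - m) * v$0 + of_real (- b * B / ?S^2 - \<gamma> * B) * v$1 + of_real (- lam * B) * v$3 = \<i> * complex_of_real \<omega> * v $ 0"
    using eq[of 0] by (simp add: JM_def B_def I_def eval_nat_numeral)
  have e1: "of_real (- b * I / ?S^2 + \<gamma> * I) * v$0 + of_real (b * B / ?S^2 + \<gamma> * B - m - \<mu>) * v$1 + of_real (lam * B) * v$3 = \<i> * complex_of_real \<omega> * v $ 1"
    using eq[of 1] by (simp add: JM_def B_def I_def eval_nat_numeral)
  have e2: "of_real (r - \<beta> * I - e * B) * v$2 + of_real r * v$3 = \<i> * complex_of_real \<omega> * v $ 2"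
    using eq[of 2] by (simp add: JM_def B_def I_def eval_nat_numeral)
  have e3: "of_real (\<beta> * I) * v$2 + of_real (- n - e * B) * v$3 = \<i> * complex_of_real \<omega> * v $ 3"
    using eq[of 3] by (simp add: JM_def B_def I_def eval_nat_numeral)
  show False
  proof (cases "v$2 \<noteq> 0 \<or> v$3 \<noteq> 0")
    case True
    from two_by_two[OF w0 e2 e3 True]
    have t: "r - \<beta> * I - e * B + (- n - e * B) = 0"
      and d: "(r - \<beta> * I - e * B) * (- n - e * B) - r * (\<beta> * I) = \<omega>^2" by auto
    have "(r - \<beta> * I - e * B) = n + e * B" using t by simp
    with d have "(n + e*B) * (- n - e * B) - r * (\<beta> * I) = \<omega>^2" by simp
    then have "- (n + e*B) * (n + e*B) - r * (\<beta> * I) = \<omega>^2" by (simp add: algebra_simps)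
    moreover have "(n + e*B) * (n + e*B) \<ge> 0" by simp
    moreover have "r * (\<beta> * I) > 0" using assms I by simp
    moreover have "\<omega>^2 > 0" using w0 by simp
    ultimately show False by linarith
  next
    case False
    then have z: "v$2 = 0" "v$3 = 0" by auto
    have nz: "v$0 \<noteq> 0 \<or> v$1 \<noteq> 0"
    proof (rule ccontr)
      assume "\<not> (v$0 \<noteq> 0 \<or> v$1 \<noteq> 0)"
      then have "v = 0\<^sub>v 4"
        apply (intro eq_vecI) using z dv by (auto simp: less_Suc_eq eval_nat_numeral)
      with v show False by simp
    qed
    from e0 e1 z have e0': "of_real (b * I / ?S^2 - \<gamma> * I - m) * v$0 + of_real (- b * B / ?S^2 - \<gamma> * B) * v$1 = \<i> * complex_of_real \<omega> * v $ 0"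
      and e1': "of_real (- b * I / ?S^2 + \<gamma> * I) * v$0 + of_real (b * B / ?S^2 + \<gamma> * B - m - \<mu>) * v$1 = \<i> * complex_of_real \<omega> * v $ 1"
      by simp_all
    from two_by_two[OF w0 e0' e1' nz]
    have t: "b * I / ?S^2 - \<gamma> * I - m + (b * B / ?S^2 + \<gamma> * B - m - \<mu>) = 0" by auto
    have "b * I / ?S^2 + b * B / ?S^2 = b * ?S / ?S^2" by (simp add: add_divide_distrib algebra_simps)
    also have "\<dots> = b / ?S" using B I by (simp add: power2_eq_square)
    also have "\<dots> = b * \<gamma> / \<mu>" using SS assms by simp
    finally have "b * \<gamma> / \<mu> - \<gamma> * I + \<gamma> * B - 2 * m - \<mu> = 0" using t by simp
    moreover have "\<gamma> * I = (b * \<gamma> - m * \<mu>) / \<mu>" unfolding I_def x_def E4_def using assms by (simp add: field_simps)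
    moreover have "\<gamma> * B = (\<mu>^2 - b * \<gamma> + m * \<mu>) / \<mu>" unfolding B_def x_def E4_def using assms by (simp add: field_simps)
    ultimately have "b * \<gamma> / \<mu> - (b * \<gamma> - m * \<mu>) / \<mu> + (\<mu>^2 - b * \<gamma> + m * \<mu>) / \<mu> - 2 * m - \<mu> = 0" by simp
    then have "- (b * \<gamma>) / \<mu> = 0" using assms by (simp add: field_simps power2_eq_square)
    then show False using assms by simp
  qed
qed

end
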